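(* Let $q$ be a prime power, $1\le k<n$, let $g_1,\dots,g_n\in\mathbb{F}_{q^n}$ be linearly independent over $\mathbb{F}_q$, and let $\mathcal{G}$ be the Gabidulin code over $\mathbb{F}_{q^n}$ (so $m=n$) of dimension $k$ with respect to $g_1,\dots,g_n$. Let $f(x)=x^{q^{n-1}}+f_{\le k-1}(x)$, where $f_{\le k-1}\in\mathcal{L}_q(x,\mathbb{F}_{q^n})$ is zero or has $q$-degree at most $k-1$. Then $\sigma_f=(f(g_1),\dots,f(g_n))$ is a deep hole of $\mathcal{G}$ in the rank metric, i.e. $d_R(\sigma_f,\mathcal{G})=n-k$.
   Context: $\mathcal{L}_q(x,\mathbb{F}_{q^n})$ is the set of $q$-linearized polynomials $\sum_i a_ix^{q^i}$ with $a_i\in\mathbb{F}_{q^n}$, $q$-degree being the largest $i$ with $a_i\ne0$. Rank distance: $d_R(\mathbf{u},\mathbf{v})=\dim_{\mathbb{F}_q}\langle u_1-v_1,\dots,u_n-v_n\rangle$, $d_R(\mathbf{u},C)=\min_{\mathbf{c}\in C}d_R(\mathbf{u},\mathbf{c})$; a deep hole is a word attaining the covering radius $\max_{\mathbf{u}}d_R(\mathbf{u},C)$, which for $\mathcal{G}$ is $n-k$. The Gabidulin code of dimension $k$ is $\mathcal{G}=\{(v(g_1),\dots,v(g_n)) : v\in\mathcal{L}_q(x,\mathbb{F}_{q^n}),\ v=0\text{ or }\deg_q(v)<k\}$. *)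

theory Defs
  imports "HOL-Computational_Algebra.Primes"
begin

(* The finite field F_{q^n} is modelled by a finite field type 'a with CARD('a) = q^n.
   Its subfield F_q is the set of roots of x^q - x. *)
definition Fq :: "nat \<Rightarrow> 'a::field set" where
  "Fq q = {x. x ^ q = x}"

definition prime_power :: "nat \<Rightarrow> bool" where
  "prime_power q \<longleftrightarrow> (\<exists>p r. prime p \<and> r > 0 \<and> q = p ^ r)"

definition Fq_span :: "nat \<Rightarrow> 'a::field set \<Rightarrow> 'a set" where
  "Fq_span q S = {x. \<exists>T c. finite T \<and> T \<subseteq> S \<and> (\<forall>t\<in>T. c t \<in> Fq q) \<and> x = (\<Sum>t\<in>T. c t * t)}"

definition Fq_dim :: "nat \<Rightarrow> 'a::field set \<Rightarrow> nat" where
  "Fq_dim q S = (LEAST d. \<exists>xs. length xs = d \<and> Fq_span q (set xs) = Fq_span q S)"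

definition Fq_lin_indep :: "nat \<Rightarrow> nat \<Rightarrow> (nat \<Rightarrow> 'a::field) \<Rightarrow> bool" where
  "Fq_lin_indep q n g \<longleftrightarrow>
     (\<forall>c. (\<forall>i<n. c i \<in> Fq q) \<and> (\<Sum>i<n. c i * g i) = 0 \<longrightarrow> (\<forall>i<n. c i = 0))"

(* q-linearized polynomial with coefficient function a (finite support), evaluated at x *)
definition lin_eval :: "nat \<Rightarrow> (nat \<Rightarrow> 'a::field) \<Rightarrow> 'a \<Rightarrow> 'a" where
  "lin_eval q a x = (\<Sum>i\<in>{i. a i \<noteq> 0}. a i * x ^ (q ^ i))"

definition qdeg_less :: "(nat \<Rightarrow> 'a::zero) \<Rightarrow> nat \<Rightarrow> bool" where
  "qdeg_less a k \<longleftrightarrow> (\<forall>i\<ge>k. a i = 0)"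

(* words of length n are functions nat => 'a, only indices < n matter *)
definition rank_dist :: "nat \<Rightarrow> nat \<Rightarrow> (nat \<Rightarrow> 'a::field) \<Rightarrow> (nat \<Rightarrow> 'a) \<Rightarrow> nat" where
  "rank_dist q n u v = Fq_dim q {u i - v i | i. i < n}"

definition rank_dist_code :: "nat \<Rightarrow> nat \<Rightarrow> (nat \<Rightarrow> 'a::field) \<Rightarrow> (nat \<Rightarrow> 'a) set \<Rightarrow> nat" where
  "rank_dist_code q n u C = Min {rank_dist q n u c | c. c \<in> C}"

definition gabidulin :: "nat \<Rightarrow> nat \<Rightarrow> nat \<Rightarrow> (nat \<Rightarrow> 'a::field) \<Rightarrow> (nat \<Rightarrow> 'a) set" where
  "gabidulin q n k g = {(\<lambda>i. if i < n then lin_eval q a (g i) else 0) | a.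
        finite {i. a i \<noteq> 0} \<and> qdeg_less a k}"

end

theory Submission
  imports Defs "HOL-Computational_Algebra.Polynomial" "HOL-Library.FuncSet"
begin


definition qp :: "nat \<Rightarrow> (nat \<Rightarrow> 'a::field) \<Rightarrow> nat \<Rightarrow> 'a \<Rightarrow> 'a" where
  "qp q c m x = (\<Sum>j<m. c j * x ^ (q ^ j))"

lemma qp_roots:
  fixes c :: "nat \<Rightarrow> 'a::field"
  assumes q: "2 \<le> q" and j0: "j0 < m" and c0: "c j0 \<noteq> 0"
  shows "card {x. qp q c m x = 0} \<le> q ^ (m - 1)"
proof -
  define P where "P = (\<Sum>j<m. Polynomial.monom (c j) (q ^ j))"
  have ev: "poly P x = qp q c m x" for x
    by (simp add: P_def qp_def poly_sum poly_monom)
  have "coeff P (q ^ j0) = (\<Sum>j<m. if j = j0 then c j else 0)"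
    unfolding P_def coeff_sum coeff_monom
    using q by (intro sum.cong) auto
  also have "\<dots> = c j0" using j0 by simp
  finally have "P \<noteq> 0" using c0 by auto
  have "degree P \<le> q ^ (m - 1)"
  proof (rule degree_le, intro allI impI)
    fix i assume i: "q ^ (m - 1) < i"
    have "q ^ j \<noteq> i" if "j < m" for j
    proof -
      have "q ^ j \<le> q ^ (m - 1)" using that q by (intro power_increasing) auto
      thus ?thesis using i by auto
    qed
    thus "coeff P i = 0" unfolding P_def coeff_sum coeff_monom by auto
  qed
  have "card {x. poly P x = 0} \<le> degree P" by (rule card_poly_roots_bound) fact
  thus ?thesis using \<open>degree P \<le> _\<close> ev by simp
qed

lemma fiber_bound:
  fixes h :: "'a::{ab_group_add,finite} \<Rightarrow> 'b::ab_group_add"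
  assumes add: "\<And>x y. h (x + y) = h x + h y"
  shows "card (UNIV :: 'a set) \<le> card (range h) * card {x. h x = 0}"
proof -
  have "UNIV = (\<Union>y\<in>range h. h -` {y})" by auto
  hence "card (UNIV :: 'a set) \<le> (\<Sum>y\<in>range h. card (h -` {y}))"
    using card_UN_le[of "range h" "\<lambda>y. h -` {y}"] by simp
  also have "\<dots> \<le> card (range h) * card {x. h x = 0}"
  proof (rule sum_bounded_above[where K = "card {x. h x = 0}", simplified])
    fix y assume "y \<in> range h"
    then obtain x0 where y: "y = h x0" by auto
    have sub: "h (x - x0) = h x - h x0" for x
      using add[of "x - x0" x0] by (simp add: algebra_simps)
    have "inj_on (\<lambda>x. x - x0) (h -` {y})" by (auto simp: inj_on_def)
    moreover have "(\<lambda>x. x - x0) ` (h -` {y}) \<subseteq> {x. h x = 0}" using y sub by auto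
    ultimately show "card (h -` {y}) \<le> card {x. h x = 0}"
      by (intro card_inj_on_le) auto
  qed
  finally show ?thesis .
qed

lemma pow_card_same:
  fixes x :: "'a :: {field,finite}"
  shows   "x ^ card (UNIV :: 'a set) = x"
proof (cases "x = 0")
  case False
  have "x * (\<Prod>y\<in>UNIV-{0}. x * y) = x * x ^ (card (UNIV :: 'a set) - 1) * \<Prod>(UNIV-{0})"
    by (simp add: prod.distrib mult_ac)
  also have "x * x ^ (card (UNIV :: 'a set) - 1) = x ^ Suc (card (UNIV :: 'a set) - 1)"
    by (subst power_Suc) auto
  also have "Suc (card (UNIV :: 'a set) - 1) = card (UNIV :: 'a set)"
    using finite_UNIV_card_ge_0[where ?'a = 'a] by simp
  also have "(\<Prod>y\<in>UNIV-{0}. x * y) = (\<Prod>y\<in>UNIV-{0}. y)"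
    by (rule prod.reindex_bij_witness[of _ "\<lambda>y. y / x" "\<lambda>y. x * y"]) (use False in auto)
  finally show ?thesis
    by simp
qed (use finite_UNIV_card_ge_0[where ?'a = 'a] in auto)

lemma lin_eval_qp:
  assumes "qdeg_less a k"
  shows "lin_eval q a x = qp q a k x"
proof -
  have sub: "{i. a i \<noteq> 0} \<subseteq> {..<k}"
  proof
    fix i assume "i \<in> {i. a i \<noteq> 0}"
    hence "\<not> k \<le> i" using assms unfolding qdeg_less_def by auto
    thus "i \<in> {..<k}" by simp
  qed
  show ?thesis unfolding lin_eval_def qp_def
    by (rule sum.mono_neutral_left) (use sub in auto)
qed

lemma char_dvd_card: "CHAR('a::{field,finite}) dvd card (UNIV::'a set)"
proof -
  define c where "c = CHAR('a)"
  have c0: "c > 0" unfolding c_def by (rule finite_imp_CHAR_pos) simp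
  define H where "H = (of_nat ` {..<c} :: 'a set)"
  have cardH: "card H = c"
  proof -
    have "inj_on (of_nat :: nat \<Rightarrow> 'a) {..<c}"
    proof (rule inj_onI)
      fix i j assume i: "i \<in> {..<c}" and j: "j \<in> {..<c}" and e: "(of_nat i :: 'a) = of_nat j"
      show "i = j"
      proof (rule ccontr)
        assume "i \<noteq> j"
        hence "i < j \<or> j < i" by auto
        thus False
        proof
          assume "i < j"
          hence "c dvd j - i" using e of_nat_eq_iff_char_dvd[of i j] c_def by auto
          thus False using \<open>i < j\<close> j by (auto dest: dvd_imp_le)
        next
          assume "j < i"
          hence "c dvd i - j" using e of_nat_eq_iff_char_dvd[of j i] c_def by auto
          thus False using \<open>j < i\<close> i by (auto dest: dvd_imp_le)
        qed
      qed
    qed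
    thus ?thesis unfolding H_def by (simp add: card_image)
  qed
  have ofn: "(of_nat m :: 'a) \<in> H" for m
  proof -
    have "m = c * (m div c) + m mod c" by simp
    hence "(of_nat m :: 'a) = of_nat c * of_nat (m div c) + of_nat (m mod c)"
      by (metis of_nat_add of_nat_mult)
    also have "(of_nat c :: 'a) = 0" unfolding c_def by simp
    finally show ?thesis unfolding H_def using c0 by auto
  qed
  have Hadd: "x \<in> H \<Longrightarrow> y \<in> H \<Longrightarrow> x + y \<in> H" for x y
    unfolding H_def using ofn by (auto simp flip: of_nat_add simp: H_def)
  have Hneg: "x \<in> H \<Longrightarrow> - x \<in> H" for x
  proof -
    assume "x \<in> H"
    then obtain i where x: "x = of_nat i" unfolding H_def by auto
    have "(of_nat (c * i - i) :: 'a) = of_nat (c * i) - of_nat i"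
      using c0 by (intro of_nat_diff) simp
    also have "(of_nat (c * i) :: 'a) = 0" unfolding c_def by simp
    finally show ?thesis using ofn[of "c * i - i"] x by simp
  qed
  define C where "C = (\<lambda>x. (+) x ` H) ` (UNIV :: 'a set)"
  have sub: "(+) x1 ` H \<subseteq> (+) x2 ` H" if "x1 - x2 \<in> H" for x1 x2
  proof
    fix z assume "z \<in> (+) x1 ` H"
    then obtain h where "h \<in> H" "z = x1 + h" by auto
    hence "z = x2 + ((x1 - x2) + h)" by (simp add: algebra_simps)
    moreover have "(x1 - x2) + h \<in> H" using Hadd that \<open>h \<in> H\<close> by blast
    ultimately show "z \<in> (+) x2 ` H" by blast
  qed
  have "c * card C = card (\<Union>C)"
  proof (rule card_partition)
    show "finite C" "finite (\<Union>C)" by auto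
    show "\<And>A. A \<in> C \<Longrightarrow> card A = c" unfolding C_def using cardH
      by (auto simp: card_image inj_on_def)
    show "\<And>c1 c2. c1 \<in> C \<Longrightarrow> c2 \<in> C \<Longrightarrow> c1 \<noteq> c2 \<Longrightarrow> c1 \<inter> c2 = {}"
    proof -
      fix c1 c2 assume "c1 \<in> C" "c2 \<in> C" "c1 \<noteq> c2"
      then obtain x1 x2 where c1: "c1 = (+) x1 ` H" and c2: "c2 = (+) x2 ` H" unfolding C_def by auto
      show "c1 \<inter> c2 = {}"
      proof (rule ccontr)
        assume "c1 \<inter> c2 \<noteq> {}"
        then obtain h1 h2 where h: "h1 \<in> H" "h2 \<in> H" "x1 + h1 = x2 + h2" using c1 c2 by auto
        have "x1 - x2 = h2 + - h1" using h(3) by (simp add: algebra_simps)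
        hence d1: "x1 - x2 \<in> H" using Hadd Hneg h by metis
        have "x2 - x1 = - (x1 - x2)" by simp
        hence d2: "x2 - x1 \<in> H" using Hneg d1 by metis
        have "c1 = c2" using sub[OF d1] sub[OF d2] c1 c2 by auto
        thus False using \<open>c1 \<noteq> c2\<close> by simp
      qed
    qed
  qed
  moreover have "\<Union>C = UNIV"
  proof -
    have "x \<in> (+) x ` H" for x :: 'a using ofn[of 0] by force
    thus ?thesis unfolding C_def by blast
  qed
  ultimately show ?thesis unfolding c_def by (metis dvd_triv_left)
qed

lemma qp_diff: "qp q (\<lambda>j. a j - b j) m x = qp q a m x - qp q b m x"
  by (simp add: qp_def left_diff_distrib sum_subtractf)



locale ffq =
  fixes q n :: nat and ty :: "'a::{field,finite} itself"
  assumes frob: "\<And>x y :: 'a. (x + y) ^ q = x ^ q + y ^ q"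
    and q2: "2 \<le> q" and cardF: "card (UNIV :: 'a set) = q ^ n" and n1: "1 \<le> n"
begin

lemma qpos: "0 < q ^ i" using q2 by simp

lemma frobp: "((x::'a) + y) ^ (q ^ i) = x ^ (q ^ i) + y ^ (q ^ i)"
proof (induction i arbitrary: x y)
  case 0 then show ?case by simp
next
  case (Suc i)
  have "(x + y) ^ (q ^ Suc i) = ((x + y) ^ q) ^ (q ^ i)" by (simp add: power_mult)
  also have "\<dots> = (x ^ q) ^ (q ^ i) + (y ^ q) ^ (q ^ i)" by (simp add: frob Suc.IH)
  finally show ?case by (simp add: power_mult)
qed

lemma frob0: "(0::'a) ^ (q ^ i) = 0" using qpos by simp

lemma frob_neg: "(- (x::'a)) ^ (q ^ i) = - (x ^ (q ^ i))"
proof -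
  have "0 = (x + - x) ^ (q ^ i)" using frob0 by simp
  also have "\<dots> = x ^ (q ^ i) + (- x) ^ (q ^ i)" by (rule frobp)
  finally show ?thesis by (simp add: eq_neg_iff_add_eq_0 add.commute)
qed

lemma frob_diff: "((x::'a) - y) ^ (q ^ i) = x ^ (q ^ i) - y ^ (q ^ i)"
  using frobp[of x "- y" i] frob_neg[of y i] by simp

lemma frob_sum: "(\<Sum>j\<in>A. f j :: 'a) ^ (q ^ i) = (\<Sum>j\<in>A. f j ^ (q ^ i))"
  by (induction A rule: infinite_finite_induct) (simp_all add: frob0 frobp)

lemma frob1: "((x::'a) + y) ^ q = x ^ q + y ^ q" by (rule frob)

lemma K_pow: "c \<in> Fq q \<Longrightarrow> (c::'a) ^ (q ^ i) = c"
proof (induction i)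
  case 0 then show ?case by simp
next
  case (Suc i)
  have "c ^ (q ^ Suc i) = (c ^ q) ^ (q ^ i)" by (simp add: power_mult)
  also have "c ^ q = c" using Suc.prems by (simp add: Fq_def)
  finally show ?case using Suc by simp
qed

lemma K_0: "(0::'a) \<in> Fq q" using q2 by (simp add: Fq_def)
lemma K_1: "(1::'a) \<in> Fq q" by (simp add: Fq_def)
lemma K_add: "x \<in> Fq q \<Longrightarrow> y \<in> Fq q \<Longrightarrow> (x::'a) + y \<in> Fq q"
  by (simp add: Fq_def frob)
lemma K_diff: "x \<in> Fq q \<Longrightarrow> y \<in> Fq q \<Longrightarrow> (x::'a) - y \<in> Fq q"
  using frob_diff[of x y 1] by (simp add: Fq_def)
lemma K_mult: "x \<in> Fq q \<Longrightarrow> y \<in> Fq q \<Longrightarrow> (x::'a) * y \<in> Fq q"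
  by (simp add: Fq_def power_mult_distrib)

lemma qp_add: "qp q c m ((x::'a) + y) = qp q c m x + qp q c m y"
  by (simp add: qp_def frobp distrib_left sum.distrib)

lemma qp_smult: "c0 \<in> Fq q \<Longrightarrow> qp q c m (c0 * (x::'a)) = c0 * qp q c m x"
  by (simp add: qp_def power_mult_distrib K_pow sum_distrib_left mult_ac)

lemma pow_qn: "(x::'a) ^ (q ^ n) = x"
  using pow_card_same[of x] cardF by simp

lemma card_K: "card (Fq q :: 'a set) = q"
proof (rule antisym)
  define c :: "nat \<Rightarrow> 'a" where "c = (\<lambda>j. if j = 0 then -1 else 1)"
  have "Fq q = {x::'a. qp q c 2 x = 0}"
    by (auto simp: Fq_def qp_def c_def numeral_2_eq_2)
  also have "card \<dots> \<le> q ^ (2 - 1)" by (rule qp_roots[of q 1]) (use q2 in \<open>auto simp: c_def\<close>)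
  finally show "card (Fq q :: 'a set) \<le> q" by simp
next
  define T :: "'a \<Rightarrow> 'a" where "T = (\<lambda>x. x ^ q - x)"
  have Tadd: "T (x + y) = T x + T y" for x y by (simp add: T_def frob)
  have ker: "{x. T x = 0} = Fq q" by (auto simp: T_def Fq_def)
  have rng: "range T \<subseteq> {y. qp q (\<lambda>_. 1) n y = 0}"
  proof clarify
    fix x :: 'a
    have "qp q (\<lambda>_. 1) n (T x) = (\<Sum>j<n. (x ^ q - x) ^ (q ^ j))" by (simp add: qp_def T_def)
    also have "\<dots> = (\<Sum>j<n. x ^ (q ^ Suc j) - x ^ (q ^ j))"
      by (intro sum.cong refl) (simp add: frob_diff power_mult[symmetric] mult.commute)
    also have "\<dots> = x ^ (q ^ n) - x ^ (q ^ 0)" by (rule sum_lessThan_telescope)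
    also have "\<dots> = 0" by (simp add: pow_qn)
    finally show "qp q (\<lambda>_. 1) n (T x) = 0" .
  qed
  have "card (range T) \<le> card {y::'a. qp q (\<lambda>_. 1) n y = 0}" by (rule card_mono[OF _ rng]) simp
  also have "\<dots> \<le> q ^ (n - 1)" by (rule qp_roots[of q 0]) (use q2 n1 in auto)
  finally have r: "card (range T) \<le> q ^ (n - 1)" .
  have "q ^ n \<le> card (range T) * card {x. T x = 0}" using fiber_bound[of T] Tadd cardF by simp
  also have "\<dots> \<le> q ^ (n - 1) * card (Fq q :: 'a set)" using r ker by simp
  finally have "q * q ^ (n - 1) \<le> q ^ (n - 1) * card (Fq q :: 'a set)"
    using n1 by (metis Suc_diff_le diff_Suc_1 power_Suc)
  thus "q \<le> card (Fq q :: 'a set)" using qpos[of "n - 1"] q2 by (simp add: mult.commute)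
qed

end



context ffq
begin

lemma span_0: "(0::'a) \<in> Fq_span q S"
  unfolding Fq_span_def by (rule CollectI, rule exI[of _ "{}"]) auto

lemma span_base: "(s::'a) \<in> S \<Longrightarrow> s \<in> Fq_span q S"
  unfolding Fq_span_def using K_1
  by (intro CollectI exI[of _ "{s}"] exI[of _ "\<lambda>_. 1"]) auto

lemma span_add:
  assumes "(x::'a) \<in> Fq_span q S" "y \<in> Fq_span q S"
  shows "x + y \<in> Fq_span q S"
proof -
  obtain T1 c1 where 1: "finite T1" "T1 \<subseteq> S" "\<forall>t\<in>T1. c1 t \<in> Fq q" "x = (\<Sum>t\<in>T1. c1 t * t)"
    using assms(1) unfolding Fq_span_def by blast
  obtain T2 c2 where 2: "finite T2" "T2 \<subseteq> S" "\<forall>t\<in>T2. c2 t \<in> Fq q" "y = (\<Sum>t\<in>T2. c2 t * t)"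
    using assms(2) unfolding Fq_span_def by blast
  define c where "c t = (if t \<in> T1 then c1 t else 0) + (if t \<in> T2 then c2 t else 0)" for t
  have e1: "(\<Sum>t\<in>T1 \<union> T2. (if t \<in> T1 then c1 t else 0) * t) = x"
    unfolding 1(4) by (rule sum.mono_neutral_cong_right) (use 1 2 in auto)
  have e2: "(\<Sum>t\<in>T1 \<union> T2. (if t \<in> T2 then c2 t else 0) * t) = y"
    unfolding 2(4) by (rule sum.mono_neutral_cong_right) (use 1 2 in auto)
  have "x + y = (\<Sum>t\<in>T1 \<union> T2. c t * t)"
    unfolding c_def distrib_right sum.distrib e1 e2 ..
  moreover have "\<forall>t\<in>T1 \<union> T2. c t \<in> Fq q"
    using 1(3) 2(3) K_0 K_add unfolding c_def by auto
  ultimately show ?thesis unfolding Fq_span_def using 1 2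
    by (intro CollectI exI[of _ "T1 \<union> T2"] exI[of _ c]) auto
qed

lemma span_smult:
  assumes "c0 \<in> Fq q" "(x::'a) \<in> Fq_span q S"
  shows "c0 * x \<in> Fq_span q S"
proof -
  obtain T c where 1: "finite T" "T \<subseteq> S" "\<forall>t\<in>T. c t \<in> Fq q" "x = (\<Sum>t\<in>T. c t * t)"
    using assms(2) unfolding Fq_span_def by blast
  have "c0 * x = (\<Sum>t\<in>T. (c0 * c t) * t)" unfolding 1(4) by (simp add: sum_distrib_left mult_ac)
  moreover have "\<forall>t\<in>T. c0 * c t \<in> Fq q" using 1(3) assms(1) K_mult by auto
  ultimately show ?thesis unfolding Fq_span_def using 1
    by (intro CollectI exI[of _ T] exI[of _ "\<lambda>t. c0 * c t"]) auto
qed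

lemma span_sum:
  assumes "finite A" "\<forall>i\<in>A. c i \<in> Fq q \<and> (v i :: 'a) \<in> Fq_span q S"
  shows "(\<Sum>i\<in>A. c i * v i) \<in> Fq_span q S"
  using assms by (induction A rule: finite_induct) (auto intro: span_0 span_add span_smult)

lemma span_insert0: "Fq_span q (insert (0::'a) S) = Fq_span q S"
proof
  show "Fq_span q S \<subseteq> Fq_span q (insert 0 S)" unfolding Fq_span_def by blast
next
  show "Fq_span q (insert 0 S) \<subseteq> Fq_span q S"
  proof
    fix x assume "x \<in> Fq_span q (insert 0 S)"
    then obtain T c where 1: "finite T" "T \<subseteq> insert 0 S" "\<forall>t\<in>T. c t \<in> Fq q" "x = (\<Sum>t\<in>T. c t * t)"
      unfolding Fq_span_def by blast
    have "x = (\<Sum>t\<in>T - {0}. c t * t)" unfolding 1(4)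
      by (rule sum.mono_neutral_right) (use 1 in auto)
    thus "x \<in> Fq_span q S" unfolding Fq_span_def using 1
      by (intro CollectI exI[of _ "T - {0}"] exI[of _ c]) auto
  qed
qed

lemma span_insert:
  "Fq_span q (insert (x::'a) S) \<subseteq> (\<lambda>(c, y). c * x + y) ` (Fq q \<times> Fq_span q S)"
proof
  fix z assume "z \<in> Fq_span q (insert x S)"
  then obtain T c where 1: "finite T" "T \<subseteq> insert x S" "\<forall>t\<in>T. c t \<in> Fq q" "z = (\<Sum>t\<in>T. c t * t)"
    unfolding Fq_span_def by blast
  have y: "(\<Sum>t\<in>T - {x}. c t * t) \<in> Fq_span q S" unfolding Fq_span_def using 1
    by (intro CollectI exI[of _ "T - {x}"] exI[of _ c]) auto
  show "z \<in> (\<lambda>(c, y). c * x + y) ` (Fq q \<times> Fq_span q S)"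
  proof (cases "x \<in> T")
    case True
    have "z = c x * x + (\<Sum>t\<in>T - {x}. c t * t)" unfolding 1(4) using True 1(1)
      by (simp add: sum.remove)
    thus ?thesis using y True 1(3) by force
  next
    case False
    have "z = 0 * x + (\<Sum>t\<in>T - {x}. c t * t)" unfolding 1(4) using False by simp
    thus ?thesis using y K_0 by force
  qed
qed

lemma span_card: "card (Fq_span q (set (xs :: 'a list))) \<le> q ^ length xs"
proof (induction xs)
  case Nil
  have "Fq_span q (set ([]::'a list)) \<subseteq> {0}" unfolding Fq_span_def by auto
  hence "card (Fq_span q (set ([]::'a list))) \<le> card {0::'a}" by (intro card_mono) auto
  thus ?case by simp
next
  case (Cons x xs)
  have "card (Fq_span q (set (x # xs))) \<le> card ((\<lambda>(c, y). c * x + y) ` ((Fq q :: 'a set) \<times> Fq_span q (set xs)))"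
    using span_insert[of x "set xs"] by (intro card_mono) auto
  also have "\<dots> \<le> card ((Fq q :: 'a set) \<times> Fq_span q (set xs))" by (rule card_image_le) simp
  also have "\<dots> = q * card (Fq_span q (set xs))" by (simp add: card_cartesian_product card_K)
  also have "\<dots> \<le> q * q ^ length xs" using Cons by simp
  finally show ?case by simp
qed

lemma dim_le: "Fq_span q (set xs) = Fq_span q (S::'a set) \<Longrightarrow> Fq_dim q S \<le> length xs"
  unfolding Fq_dim_def by (rule Least_le) auto

lemma dim_ex: "\<exists>xs. length xs = Fq_dim q (set ys) \<and> Fq_span q (set xs) = Fq_span q (set (ys :: 'a list))"
  unfolding Fq_dim_def by (rule LeastI_ex) auto

end



context ffq
begin

lemma lin_sum:
  fixes h :: "'a \<Rightarrow> 'a"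
  assumes add: "\<And>x y. h (x + y) = h x + h y"
    and sm: "\<And>c x. c \<in> Fq q \<Longrightarrow> h (c * x) = c * h x"
    and fin: "finite A" and cK: "\<forall>i\<in>A. c i \<in> Fq q"
  shows "h (\<Sum>i\<in>A. c i * v i) = (\<Sum>i\<in>A. c i * h (v i))"
  using fin cK
proof (induction A rule: finite_induct)
  case empty
  have "h 0 = h 0 + h 0" using add[of 0 0] by simp
  thus ?case by (metis add_cancel_right_right sum.empty)
next
  case (insert x F)
  thus ?case by (simp add: add sm)
qed

lemma W_card:
  assumes indep: "Fq_lin_indep q n (g :: nat \<Rightarrow> 'a)" and m: "m \<le> n"
  shows "card ((\<lambda>c. \<Sum>i<m. c i * g i) ` (PiE {..<m} (\<lambda>_. Fq q))) = q ^ m"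
proof -
  have inj: "inj_on (\<lambda>c. \<Sum>i<m. c i * g i) (PiE {..<m} (\<lambda>_. Fq q))"
  proof (rule inj_onI)
    fix c c' assume c: "c \<in> PiE {..<m} (\<lambda>_. Fq q)" and c': "c' \<in> PiE {..<m} (\<lambda>_. Fq q)"
      and e: "(\<Sum>i<m. c i * g i) = (\<Sum>i<m. c' i * g i)"
    define d where "d i = (if i < m then c i - c' i else 0)" for i
    have dK: "\<forall>i<n. d i \<in> Fq q" using c c' K_diff K_0 by (auto simp: d_def PiE_def Pi_def)
    have "(\<Sum>i<n. d i * g i) = (\<Sum>i<m. (c i - c' i) * g i)"
      by (rule sum.mono_neutral_cong_right) (use m in \<open>auto simp: d_def\<close>)
    also have "\<dots> = 0" using e by (simp add: left_diff_distrib sum_subtractf)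
    finally have "\<forall>i<n. d i = 0" using indep dK unfolding Fq_lin_indep_def by blast
    hence "\<forall>i<m. c i = c' i"
    proof (intro allI impI)
      fix i assume "\<forall>i<n. d i = 0" "i < m"
      hence "d i = 0" using m by auto
      thus "c i = c' i" using \<open>i < m\<close> by (simp add: d_def)
    qed
    thus "c = c'" using c c' by (intro PiE_ext) auto
  qed
  have "card ((\<lambda>c. \<Sum>i<m. c i * g i) ` (PiE {..<m} (\<lambda>_. Fq q))) = card (PiE {..<m} (\<lambda>_. (Fq q :: 'a set)))"
    by (rule card_image[OF inj])
  also have "\<dots> = q ^ m" by (simp add: card_PiE card_K)
  finally show ?thesis .
qed

lemma W_univ:
  assumes indep: "Fq_lin_indep q n (g :: nat \<Rightarrow> 'a)"
  shows "(\<lambda>c. \<Sum>i<n. c i * g i) ` (PiE {..<n} (\<lambda>_. Fq q)) = UNIV"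
  by (rule card_subset_eq) (use W_card[OF indep le_refl] cardF in auto)

lemma lower:
  assumes indep: "Fq_lin_indep q n (g :: nat \<Rightarrow> 'a)" and k: "k < n"
  shows "n - k \<le> Fq_dim q {(g i) ^ (q ^ (n - 1)) + qp q d k (g i) | i. i < n}"
proof -
  define h where "h x = x ^ (q ^ (n - 1)) + qp q d k x" for x :: 'a
  have hadd: "h (x + y) = h x + h y" for x y by (simp add: h_def frobp qp_add)
  have hsm: "c \<in> Fq q \<Longrightarrow> h (c * x) = c * h x" for c x
    by (simp add: h_def power_mult_distrib K_pow qp_smult distrib_left)
  define ys where "ys = map (\<lambda>i. h (g i)) [0..<n]"
  have S: "{(g i) ^ (q ^ (n - 1)) + qp q d k (g i) | i. i < n} = set ys"
    by (auto simp: ys_def h_def)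
  obtain xs where xs: "length xs = Fq_dim q (set ys)" "Fq_span q (set xs) = Fq_span q (set ys)"
    using dim_ex by blast
  have rng: "range h \<subseteq> Fq_span q (set ys)"
  proof
    fix y assume "y \<in> range h"
    then obtain x where y: "y = h x" by auto
    have "x \<in> (\<lambda>c. \<Sum>i<n. c i * g i) ` (PiE {..<n} (\<lambda>_. Fq q))" using W_univ[OF indep] by simp
    then obtain c where c: "c \<in> PiE {..<n} (\<lambda>_. Fq q)" "x = (\<Sum>i<n. c i * g i)" by blast
    have "y = (\<Sum>i<n. c i * h (g i))" unfolding y c(2)
      by (rule lin_sum) (use hadd hsm c(1) in auto)
    also have "\<dots> \<in> Fq_span q (set ys)"
      by (rule span_sum) (use c(1) in \<open>auto intro!: span_base simp: ys_def\<close>)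
    finally show "y \<in> Fq_span q (set ys)" .
  qed
  have c1: "card (range h) \<le> q ^ Fq_dim q (set ys)"
  proof -
    have "card (range h) \<le> card (Fq_span q (set ys))" by (rule card_mono[OF _ rng]) simp
    also have "\<dots> = card (Fq_span q (set xs))" using xs by simp
    also have "\<dots> \<le> q ^ length xs" by (rule span_card)
    finally show ?thesis using xs by simp
  qed
  have qn: "q ^ (n - 1) * q = q ^ n" using n1 by (cases n) (auto simp: mult.commute)
  have hq: "(h x) ^ q = x + (\<Sum>j<k. d j ^ q * x ^ (q ^ Suc j))" for x
  proof -
    have a: "(x ^ (q ^ (n - 1))) ^ q = x" by (simp only: power_mult[symmetric] qn pow_qn)
    have b: "(qp q d k x) ^ q = (\<Sum>j<k. d j ^ q * x ^ (q ^ Suc j))"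
      using frob_sum[of "\<lambda>j. d j * x ^ (q ^ j)" "{..<k}" 1]
      by (simp add: qp_def power_mult_distrib power_mult[symmetric] mult.commute)
    show ?thesis by (simp only: h_def frob a b)
  qed
  have c2: "card {x. h x = 0} \<le> q ^ k"
  proof -
    define e :: "nat \<Rightarrow> 'a" where "e = case_nat 1 (\<lambda>j. d j ^ q)"
    have "{x. h x = 0} \<subseteq> {x. qp q e (Suc k) x = 0}"
    proof clarify
      fix x assume h0: "h x = 0"
      have "qp q e (Suc k) x = x + (\<Sum>j<k. d j ^ q * x ^ (q ^ Suc j))"
        unfolding qp_def sum.lessThan_Suc_shift by (simp add: e_def)
      also have "\<dots> = 0" using hq[of x] h0 frob0[of 1] by simp
      finally show "qp q e (Suc k) x = 0" .
    qed
    hence "card {x. h x = 0} \<le> card {x. qp q e (Suc k) x = 0}" by (intro card_mono) auto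
    also have "\<dots> \<le> q ^ (Suc k - 1)" by (rule qp_roots[of q 0]) (use q2 in \<open>auto simp: e_def\<close>)
    finally show ?thesis by simp
  qed
  have "q ^ n \<le> card (range h) * card {x. h x = 0}" using fiber_bound[of h] hadd cardF by simp
  also have "\<dots> \<le> q ^ Fq_dim q (set ys) * q ^ k" using c1 c2 by (rule mult_le_mono)
  also have "\<dots> = q ^ (Fq_dim q (set ys) + k)" by (simp add: power_add)
  finally have "q ^ n \<le> q ^ (Fq_dim q (set ys) + k)" .
  moreover have q1: "1 < q" using q2 by simp
  ultimately have "n \<le> Fq_dim q (set ys) + k" using power_le_imp_le_exp[OF q1] by blast
  thus ?thesis unfolding S by linarith
qed

lemma interp:
  assumes indep: "Fq_lin_indep q n (g :: nat \<Rightarrow> 'a)" and k: "1 \<le> k" "k \<le> n"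
  shows "\<exists>a. (\<forall>i\<ge>k. a i = 0) \<and> (\<forall>i<k. qp q a k (g i) = t i)"
proof -
  define D where "D = {f :: nat \<Rightarrow> 'a. \<forall>i\<ge>k. f i = 0}"
  define \<Phi> where "\<Phi> a = (\<lambda>i. if i < k then qp q a k (g i) else 0)" for a
  have finD: "finite D"
  proof -
    have "D \<subseteq> (\<lambda>f i. if i < k then f i else 0) ` PiE {..<k} (\<lambda>_. UNIV)"
    proof
      fix f assume "f \<in> D"
      hence "f = (\<lambda>i. if i < k then restrict f {..<k} i else 0)" by (auto simp: D_def fun_eq_iff not_less)
      moreover have "restrict f {..<k} \<in> PiE {..<k} (\<lambda>_. UNIV)" by simp
      ultimately show "f \<in> (\<lambda>f i. if i < k then f i else 0) ` PiE {..<k} (\<lambda>_. UNIV)" by blast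
    qed
    thus ?thesis by (rule finite_subset) (simp add: finite_PiE)
  qed
  have sub: "\<Phi> ` D \<subseteq> D" by (auto simp: \<Phi>_def D_def)
  have inj: "inj_on \<Phi> D"
  proof (rule inj_onI)
    fix a1 a2 assume a1: "a1 \<in> D" and a2: "a2 \<in> D" and e: "\<Phi> a1 = \<Phi> a2"
    define d where "d = (\<lambda>j. a1 j - a2 j)"
    have z: "qp q d k (g i) = 0" if "i < k" for i
      using fun_cong[OF e, of i] that by (simp add: \<Phi>_def d_def qp_diff)
    show "a1 = a2"
    proof (rule ccontr)
      assume "a1 \<noteq> a2"
      then obtain j0 where j: "a1 j0 \<noteq> a2 j0" by auto
      have j0: "j0 < k"
      proof (rule ccontr)
        assume "\<not> j0 < k"
        thus False using a1 a2 j by (auto simp: D_def)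
      qed
      have dj: "d j0 \<noteq> 0" using j by (simp add: d_def)
      let ?W = "(\<lambda>c :: nat \<Rightarrow> 'a. \<Sum>i<k. c i * g i) ` PiE {..<k} (\<lambda>_. Fq q)"
      have "?W \<subseteq> {x. qp q d k x = 0}"
      proof clarify
        fix c :: "nat \<Rightarrow> 'a" assume c: "c \<in> PiE {..<k} (\<lambda>_. Fq q)"
        have "qp q d k (\<Sum>i<k. c i * g i) = (\<Sum>i<k. c i * qp q d k (g i))"
          by (rule lin_sum) (use c in \<open>auto simp: qp_add qp_smult\<close>)
        also have "\<dots> = 0" using z by simp
        finally show "qp q d k (\<Sum>i<k. c i * g i) = 0" .
      qed
      hence "card ?W \<le> card {x. qp q d k x = 0}" by (intro card_mono) auto
      also have "\<dots> \<le> q ^ (k - 1)" by (rule qp_roots[of q j0 k d, OF q2 j0 dj])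
      finally have cw: "card ?W \<le> q ^ (k - 1)" .
      have "card ?W = q ^ k" by (rule W_card[OF indep k(2)])
      hence "q ^ k \<le> q ^ (k - 1)" using cw by (simp only:)
      moreover have "q ^ (k - 1) < q ^ k" using q2 k(1) by (intro power_strict_increasing) auto
      ultimately show False by simp
    qed
  qed
  have "\<Phi> ` D = D" by (rule endo_inj_surj[OF finD sub inj])
  moreover have "(\<lambda>i. if i < k then t i else 0) \<in> D" by (auto simp: D_def)
  ultimately have "(\<lambda>i. if i < k then t i else 0) \<in> \<Phi> ` D" by simp
  then obtain a where a0: "a \<in> D" "(\<lambda>i. if i < k then t i else 0) = \<Phi> a" by (rule imageE)
  hence a: "a \<in> D" "\<Phi> a = (\<lambda>i. if i < k then t i else 0)" by simp_all
  have "\<forall>i<k. qp q a k (g i) = t i"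
  proof (intro allI impI)
    fix i assume "i < k"
    thus "qp q a k (g i) = t i" using fun_cong[OF a(2), of i] by (simp add: \<Phi>_def)
  qed
  thus ?thesis using a(1) unfolding D_def by blast
qed

end



theorem proposition4:
  fixes q n k :: nat and g :: "nat \<Rightarrow> 'a::{field,finite}" and b :: "nat \<Rightarrow> 'a"
  assumes "prime_power q"
    and "card (UNIV :: 'a set) = q ^ n"
    and "1 \<le> k" and "k < n"
    and "Fq_lin_indep q n g"
    and "finite {i. b i \<noteq> 0}" and "qdeg_less b k"
  shows "rank_dist_code q n
           (\<lambda>i. if i < n then (g i) ^ (q ^ (n - 1)) + lin_eval q b (g i) else 0)
           (gabidulin q n k g) = n - k"
proof -
  from assms(1) obtain p r where p: "prime p" "r > 0" "q = p ^ r" unfolding prime_power_def by blast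
  have cpos: "CHAR('a) > 0" by (rule finite_imp_CHAR_pos) simp
  have cprime: "prime CHAR('a)" by (rule prime_CHAR_semidom[OF cpos])
  have "CHAR('a) dvd p ^ (r * n)" using char_dvd_card[where 'a='a] assms(2) p(3)
    by (simp add: power_mult)
  hence "CHAR('a) dvd p" using cprime prime_dvd_power by blast
  hence cp: "CHAR('a) = p" using cprime p(1) primes_dvd_imp_eq by blast
  have frob: "(x + y) ^ q = x ^ q + y ^ q" for x y :: 'a
    by (rule freshmans_dream'[OF cprime]) (simp add: cp p(3))
  have "2 \<le> p" using p(1) by (rule prime_ge_2_nat)
  moreover have "p \<le> q" using p(2,3) \<open>2 \<le> p\<close> by (simp add: self_le_power)
  ultimately have q2: "2 \<le> q" by simp
  have n1: "1 \<le> n" using assms(3,4) by simp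
  interpret F: ffq q n "TYPE('a)" by standard (use frob q2 assms(2) n1 in auto)
  define \<sigma> where "\<sigma> = (\<lambda>i. if i < n then (g i) ^ (q ^ (n - 1)) + lin_eval q b (g i) else 0)"
  define C where "C = gabidulin q n k g"
  have blin: "lin_eval q b x = qp q b k x" for x using lin_eval_qp[OF assms(7)] .
  have lowb: "n - k \<le> rank_dist q n \<sigma> c" if "c \<in> C" for c
  proof -
    from that obtain a where a: "c = (\<lambda>i. if i < n then lin_eval q a (g i) else 0)"
        "finite {i. a i \<noteq> 0}" "qdeg_less a k"
      unfolding C_def gabidulin_def mem_Collect_eq by blast
    have ei: "\<sigma> i - c i = (g i) ^ (q ^ (n - 1)) + qp q (\<lambda>j. b j - a j) k (g i)" if "i < n" for i
      using that by (simp add: \<sigma>_def a(1) blin lin_eval_qp[OF a(3)] qp_diff)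
    have "{\<sigma> i - c i | i. i < n} = {(g i) ^ (q ^ (n - 1)) + qp q (\<lambda>j. b j - a j) k (g i) | i. i < n}"
    proof (intro Collect_cong iffI)
      fix x assume "\<exists>i. x = \<sigma> i - c i \<and> i < n"
      then obtain i where "x = \<sigma> i - c i" "i < n" by blast
      thus "\<exists>i. x = (g i) ^ (q ^ (n - 1)) + qp q (\<lambda>j. b j - a j) k (g i) \<and> i < n" using ei by metis
    next
      fix x assume "\<exists>i. x = (g i) ^ (q ^ (n - 1)) + qp q (\<lambda>j. b j - a j) k (g i) \<and> i < n"
      then obtain i where "x = (g i) ^ (q ^ (n - 1)) + qp q (\<lambda>j. b j - a j) k (g i)" "i < n" by blast
      thus "\<exists>i. x = \<sigma> i - c i \<and> i < n" using ei by metis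
    qed
    thus ?thesis unfolding rank_dist_def using F.lower[OF assms(5) assms(4)] by simp
  qed
  have dimn: "rank_dist q n \<sigma> c \<le> n" for c
  proof -
    have "set (map (\<lambda>i. \<sigma> i - c i) [0..<n]) = {\<sigma> i - c i | i. i < n}" by auto
    hence "Fq_dim q {\<sigma> i - c i | i. i < n} \<le> length (map (\<lambda>i. \<sigma> i - c i) [0..<n])"
      by (intro F.dim_le) simp
    thus ?thesis unfolding rank_dist_def by simp
  qed
  obtain a0 where a0: "\<forall>i\<ge>k. a0 i = 0"
      "\<forall>i<k. qp q a0 k (g i) = (g i) ^ (q ^ (n - 1)) + qp q b k (g i)"
    using F.interp[OF assms(5) assms(3) less_imp_le[OF assms(4)],
      where t = "\<lambda>i. (g i) ^ (q ^ (n - 1)) + qp q b k (g i)"] by blast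
  have qa0: "qdeg_less a0 k" using a0(1) by (simp add: qdeg_less_def)
  define c0 where "c0 = (\<lambda>i. if i < n then lin_eval q a0 (g i) else 0)"
  have c0C: "c0 \<in> C"
  proof -
    have "{i. a0 i \<noteq> 0} \<subseteq> {..<k}" using a0(1) not_less by auto
    hence "finite {i. a0 i \<noteq> 0}" by (rule finite_subset) simp
    thus ?thesis unfolding C_def gabidulin_def c0_def using qa0
      by (intro CollectI exI[of _ a0]) simp
  qed
  have up: "rank_dist q n \<sigma> c0 \<le> n - k"
  proof -
    define f where "f i = \<sigma> i - c0 i" for i
    have f0: "f i = 0" if "i < k" for i
    proof -
      have "i < n" using that assms(4) by simp
      thus ?thesis using that a0(2) by (simp add: f_def \<sigma>_def c0_def blin lin_eval_qp[OF qa0])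
    qed
    have S: "{\<sigma> i - c0 i | i. i < n} = insert 0 (set (map f [k..<n]))"
    proof (intro equalityI subsetI)
      fix x assume "x \<in> {\<sigma> i - c0 i | i. i < n}"
      then obtain i where i: "i < n" "x = f i" by (auto simp: f_def)
      show "x \<in> insert 0 (set (map f [k..<n]))"
      proof (cases "i < k")
        case True thus ?thesis using i f0 by simp
      next
        case False thus ?thesis using i by auto
      qed
    next
      fix x assume "x \<in> insert 0 (set (map f [k..<n]))"
      hence "x = f 0 \<or> (\<exists>i. k \<le> i \<and> i < n \<and> x = f i)" using f0[of 0] assms(3) by auto
      thus "x \<in> {\<sigma> i - c0 i | i. i < n}" using assms(3,4) by (auto simp: f_def)
    qed
    have "Fq_dim q {\<sigma> i - c0 i | i. i < n} \<le> length (map f [k..<n])"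
      by (rule F.dim_le) (simp only: S F.span_insert0)
    thus ?thesis unfolding rank_dist_def by simp
  qed
  define R where "R = {rank_dist q n \<sigma> c | c. c \<in> C}"
  have "Min R = n - k"
  proof (rule Min_eqI)
    have "R \<subseteq> {..n}" using dimn unfolding R_def by auto
    thus "finite R" by (rule finite_subset) simp
    show "\<And>y. y \<in> R \<Longrightarrow> n - k \<le> y" using lowb unfolding R_def by auto
    have "rank_dist q n \<sigma> c0 = n - k" using up lowb[OF c0C] by simp
    thus "n - k \<in> R" using c0C unfolding R_def by (intro CollectI exI[of _ c0]) simp
  qed
  thus ?thesis unfolding rank_dist_code_def R_def C_def \<sigma>_def .
qed


end
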